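(* Let $\mathcal{D}$ be a category containing all finite connected colimits. Then $\mathrm{Tw}(\mathcal{D})$ has all pushouts.
   Context: For a category $\mathcal{D}$, the Grothendieck twist $\mathrm{Tw}(\mathcal{D})$ is the category whose objects are finite families $\{a_i\}_{i\in I}$ ($I$ a finite set, each $a_i$ an object of $\mathcal{D}$), and whose morphisms $\{a_i\}_{i\in I}\to\{b_j\}_{j\in J}$ are pairs consisting of a function $f:I\to J$ and morphisms $F_i:a_i\to b_{f(i)}$ in $\mathcal{D}$ for all $i\in I$; composition composes set maps and components. *)

theory Defs
  imports "HOL-Library.FuncSet"
begin

record ('o, 'a) cat =
  Obj :: "'o set"
  Arr :: "'a set"
  Dom :: "'a \<Rightarrow> 'o"
  Cod :: "'a \<Rightarrow> 'o"
  Id  :: "'o \<Rightarrow> 'a"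
  Comp :: "'a \<Rightarrow> 'a \<Rightarrow> 'a"   (* Comp C g f = g \<circ> f *)

definition category :: "('o, 'a, 'm) cat_scheme \<Rightarrow> bool" where
  "category C \<longleftrightarrow>
     (\<forall>f\<in>Arr C. Dom C f \<in> Obj C \<and> Cod C f \<in> Obj C) \<and>
     (\<forall>x\<in>Obj C. Id C x \<in> Arr C \<and> Dom C (Id C x) = x \<and> Cod C (Id C x) = x) \<and>
     (\<forall>f\<in>Arr C. \<forall>g\<in>Arr C. Cod C f = Dom C g \<longrightarrow>
        Comp C g f \<in> Arr C \<and> Dom C (Comp C g f) = Dom C f \<and> Cod C (Comp C g f) = Cod C g) \<and>
     (\<forall>f\<in>Arr C. Comp C f (Id C (Dom C f)) = f \<and> Comp C (Id C (Cod C f)) f = f) \<and>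
     (\<forall>f\<in>Arr C. \<forall>g\<in>Arr C. \<forall>h\<in>Arr C. Cod C f = Dom C g \<longrightarrow> Cod C g = Dom C h \<longrightarrow>
        Comp C h (Comp C g f) = Comp C (Comp C h g) f)"

definition is_functor :: "('p, 'b, 'n) cat_scheme \<Rightarrow> ('o, 'a, 'm) cat_scheme \<Rightarrow>
    ('p \<Rightarrow> 'o) \<Rightarrow> ('b \<Rightarrow> 'a) \<Rightarrow> bool" where
  "is_functor J C Fo Fa \<longleftrightarrow>
     (\<forall>j\<in>Obj J. Fo j \<in> Obj C) \<and>
     (\<forall>u\<in>Arr J. Fa u \<in> Arr C \<and> Dom C (Fa u) = Fo (Dom J u) \<and> Cod C (Fa u) = Fo (Cod J u)) \<and>
     (\<forall>j\<in>Obj J. Fa (Id J j) = Id C (Fo j)) \<and>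
     (\<forall>u\<in>Arr J. \<forall>v\<in>Arr J. Cod J u = Dom J v \<longrightarrow> Fa (Comp J v u) = Comp C (Fa v) (Fa u))"

definition connected_cat :: "('p, 'b, 'n) cat_scheme \<Rightarrow> bool" where
  "connected_cat J \<longleftrightarrow> Obj J \<noteq> {} \<and>
     (\<forall>x\<in>Obj J. \<forall>y\<in>Obj J.
        (x, y) \<in> ({(Dom J u, Cod J u) | u. u \<in> Arr J} \<union> {(Cod J u, Dom J u) | u. u \<in> Arr J})\<^sup>*)"

definition finite_cat :: "('p, 'b, 'n) cat_scheme \<Rightarrow> bool" where
  "finite_cat J \<longleftrightarrow> finite (Obj J) \<and> finite (Arr J)"

definition cocone :: "('p, 'b, 'n) cat_scheme \<Rightarrow> ('o, 'a, 'm) cat_scheme \<Rightarrow>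
    ('p \<Rightarrow> 'o) \<Rightarrow> ('b \<Rightarrow> 'a) \<Rightarrow> 'o \<Rightarrow> ('p \<Rightarrow> 'a) \<Rightarrow> bool" where
  "cocone J C Fo Fa c l \<longleftrightarrow> c \<in> Obj C \<and>
     (\<forall>j\<in>Obj J. l j \<in> Arr C \<and> Dom C (l j) = Fo j \<and> Cod C (l j) = c) \<and>
     (\<forall>u\<in>Arr J. Comp C (l (Cod J u)) (Fa u) = l (Dom J u))"

definition colimit :: "('p, 'b, 'n) cat_scheme \<Rightarrow> ('o, 'a, 'm) cat_scheme \<Rightarrow>
    ('p \<Rightarrow> 'o) \<Rightarrow> ('b \<Rightarrow> 'a) \<Rightarrow> 'o \<Rightarrow> ('p \<Rightarrow> 'a) \<Rightarrow> bool" where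
  "colimit J C Fo Fa c l \<longleftrightarrow> cocone J C Fo Fa c l \<and>
     (\<forall>c' l'. cocone J C Fo Fa c' l' \<longrightarrow>
        (\<exists>!h. h \<in> Arr C \<and> Dom C h = c \<and> Cod C h = c' \<and> (\<forall>j\<in>Obj J. Comp C h (l j) = l' j)))"

text \<open>Every finite category is isomorphic to one whose objects and arrows are natural
  numbers, so index categories are taken with carrier type nat.\<close>
definition has_finite_connected_colimits :: "('o, 'a, 'm) cat_scheme \<Rightarrow> bool" where
  "has_finite_connected_colimits C \<longleftrightarrow>
     (\<forall>(J :: (nat, nat) cat) Fo Fa. category J \<and> finite_cat J \<and> connected_cat J \<and>
        is_functor J C Fo Fa \<longrightarrow> (\<exists>c l. colimit J C Fo Fa c l))"

definition has_pushouts :: "('o, 'a, 'm) cat_scheme \<Rightarrow> bool" where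
  "has_pushouts C \<longleftrightarrow>
     (\<forall>f\<in>Arr C. \<forall>g\<in>Arr C. Dom C f = Dom C g \<longrightarrow>
       (\<exists>p q. p \<in> Arr C \<and> q \<in> Arr C \<and> Dom C p = Cod C f \<and> Dom C q = Cod C g \<and>
          Cod C p = Cod C q \<and> Comp C p f = Comp C q g \<and>
          (\<forall>p' q'. p' \<in> Arr C \<and> q' \<in> Arr C \<and> Dom C p' = Cod C f \<and> Dom C q' = Cod C g \<and>
              Cod C p' = Cod C q' \<and> Comp C p' f = Comp C q' g \<longrightarrow>
             (\<exists>!h. h \<in> Arr C \<and> Dom C h = Cod C p \<and> Cod C h = Cod C p' \<and>
                    Comp C h p = p' \<and> Comp C h q = q'))))"

text \<open>Objects: finite families (I, a) with I a finite set of indices (taken inside nat) and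
  a : I \<rightarrow> Obj D (extensional). Morphisms (X, Y, f, F) with f : I \<rightarrow> J and
  F i : a i \<rightarrow> b (f i).\<close>

type_synonym 'o tw_obj = "nat set \<times> (nat \<Rightarrow> 'o)"
type_synonym ('o, 'a) tw_arr = "'o tw_obj \<times> 'o tw_obj \<times> (nat \<Rightarrow> nat) \<times> (nat \<Rightarrow> 'a)"

definition tw_objs :: "('o, 'a, 'm) cat_scheme \<Rightarrow> 'o tw_obj set" where
  "tw_objs D = {(I, a). finite I \<and> a \<in> extensional I \<and> (\<forall>i\<in>I. a i \<in> Obj D)}"

definition tw_arrs :: "('o, 'a, 'm) cat_scheme \<Rightarrow> ('o, 'a) tw_arr set" where
  "tw_arrs D = {(X, Y, f, F). X \<in> tw_objs D \<and> Y \<in> tw_objs D \<and>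
      f \<in> extensional (fst X) \<and> F \<in> extensional (fst X) \<and>
      (\<forall>i\<in>fst X. f i \<in> fst Y \<and> F i \<in> Arr D \<and> Dom D (F i) = snd X i \<and>
                   Cod D (F i) = snd Y (f i))}"

definition Tw :: "('o, 'a, 'm) cat_scheme \<Rightarrow> ('o tw_obj, ('o, 'a) tw_arr) cat" where
  "Tw D = \<lparr> Obj = tw_objs D,
            Arr = tw_arrs D,
            Dom = (\<lambda>(X, Y, f, F). X),
            Cod = (\<lambda>(X, Y, f, F). Y),
            Id = (\<lambda>X. (X, X, (\<lambda>i\<in>fst X. i), (\<lambda>i\<in>fst X. Id D (snd X i)))),
            Comp = (\<lambda>(Y, Z, g, G) (X, Y', f, F).
                      (X, Z, (\<lambda>i\<in>fst X. g (f i)), (\<lambda>i\<in>fst X. Comp D (G (f i)) (F i)))) \<rparr>"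

end

theory Submission
  imports Defs
begin

lemma Tw_simps[simp]:
  "Obj (Tw D) = tw_objs D" "Arr (Tw D) = tw_arrs D"
  "Dom (Tw D) (X,Y,f,F) = X" "Cod (Tw D) (X,Y,f,F) = Y"
  "Comp (Tw D) (Y,Z,g,G) (X,Y',f,F) = (X, Z, (\<lambda>i\<in>fst X. g (f i)), (\<lambda>i\<in>fst X. Comp D (G (f i)) (F i)))"
  by (simp_all add: Tw_def)

lemma arith3[simp]: "(3*x) mod 3 = (0::nat)" "(3*x) div 3 = x" "(Suc (3*x)) mod 3 = 1" "(Suc (3*x)) div 3 = x"
   "(Suc (Suc (3*x))) mod 3 = 2" "(Suc (Suc (3*x))) div 3 = x"
  by presburger+

locale pspan =
  fixes D :: "('o,'a) cat"
    and I :: "nat set" and a :: "nat \<Rightarrow> 'o"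
    and J1 :: "nat set" and b :: "nat \<Rightarrow> 'o"
    and J2 :: "nat set" and c :: "nat \<Rightarrow> 'o"
    and \<phi> :: "nat \<Rightarrow> nat" and F :: "nat \<Rightarrow> 'a"
    and \<psi> :: "nat \<Rightarrow> nat" and G :: "nat \<Rightarrow> 'a"
  assumes cat: "category D"
    and fcc: "has_finite_connected_colimits D"
    and Xo: "(I,a) \<in> tw_objs D" and Yo: "(J1,b) \<in> tw_objs D" and Zo: "(J2,c) \<in> tw_objs D"
    and fa: "((I,a),(J1,b),\<phi>,F) \<in> tw_arrs D"
    and ga: "((I,a),(J2,c),\<psi>,G) \<in> tw_arrs D"
begin

lemma comp_arr: "f \<in> Arr D \<Longrightarrow> g \<in> Arr D \<Longrightarrow> Cod D f = Dom D g \<Longrightarrow>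
   Comp D g f \<in> Arr D \<and> Dom D (Comp D g f) = Dom D f \<and> Cod D (Comp D g f) = Cod D g"
  using cat unfolding category_def by blast
lemma id_arr: "x \<in> Obj D \<Longrightarrow> Id D x \<in> Arr D \<and> Dom D (Id D x) = x \<and> Cod D (Id D x) = x"
  using cat unfolding category_def by blast
lemma id_r: "f \<in> Arr D \<Longrightarrow> Comp D f (Id D (Dom D f)) = f"
  using cat unfolding category_def by blast
lemma id_l: "f \<in> Arr D \<Longrightarrow> Comp D (Id D (Cod D f)) f = f"
  using cat unfolding category_def by blast
lemma assoc: "f \<in> Arr D \<Longrightarrow> g \<in> Arr D \<Longrightarrow> h \<in> Arr D \<Longrightarrow> Cod D f = Dom D g \<Longrightarrow> Cod D g = Dom D h \<Longrightarrow>
        Comp D h (Comp D g f) = Comp D (Comp D h g) f"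
  using cat unfolding category_def by blast

lemma I_props: "finite I" "a \<in> extensional I" "\<And>i. i\<in>I \<Longrightarrow> a i \<in> Obj D"
  using Xo by (auto simp: tw_objs_def)
lemma J1_props: "finite J1" "b \<in> extensional J1" "\<And>i. i\<in>J1 \<Longrightarrow> b i \<in> Obj D"
  using Yo by (auto simp: tw_objs_def)
lemma J2_props: "finite J2" "c \<in> extensional J2" "\<And>i. i\<in>J2 \<Longrightarrow> c i \<in> Obj D"
  using Zo by (auto simp: tw_objs_def)
lemma f_props: assumes "i\<in>I" shows "\<phi> i \<in> J1" "F i \<in> Arr D" "Dom D (F i) = a i" "Cod D (F i) = b (\<phi> i)"
  using fa assms by (auto simp: tw_arrs_def)
lemma g_props: assumes "i\<in>I" shows "\<psi> i \<in> J2" "G i \<in> Arr D" "Dom D (G i) = a i" "Cod D (G i) = c (\<psi> i)"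
  using ga assms by (auto simp: tw_arrs_def)

definition U where "U = (\<lambda>j. 2*j) ` J1 \<union> (\<lambda>k. 2*k+1) ` J2"
definition R0 where "R0 = {(2*\<phi> i, 2*\<psi> i+1) | i. i\<in>I}"
definition E where "E = (R0 \<union> R0\<inverse>)\<^sup>*"
definition V where "V = (\<lambda>i. 2*\<phi> i) ` I \<union> (\<lambda>i. 2*\<psi> i+1) ` I"
definition cls where "cls u = Min (E``{u})"
definition P where "P = cls ` U"
definition ob where "ob u = (if even u then b (u div 2) else c (u div 2))"

lemma finU: "finite U" using J1_props J2_props by (simp add: U_def)

lemma E_V: "(u,v) \<in> E \<Longrightarrow> v = u \<or> v \<in> V"
  unfolding E_def by (induction rule: rtrancl_induct) (auto simp: R0_def V_def)
lemma fin_E: "finite (E``{u})"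
proof -
  have "E``{u} \<subseteq> insert u V" using E_V by auto
  moreover have "finite V" using I_props by (simp add: V_def)
  ultimately show ?thesis by (simp add: finite_subset)
qed
lemma cls_in: "(u, cls u) \<in> E"
proof -
  have "u \<in> E``{u}" by (simp add: E_def)
  hence "cls u \<in> E``{u}" unfolding cls_def using fin_E by (intro Min_in) auto
  thus ?thesis by simp
qed
lemma sym_E: "sym E" unfolding E_def by (simp add: sym_rtrancl sym_Un_converse)
lemma trans_E: "trans E" unfolding E_def by (simp add: trans_rtrancl)
lemma E_cls: assumes "(u,v) \<in> E" shows "cls u = cls v"
proof -
  have "E``{u} = E``{v}"
  proof
    show "E``{u} \<subseteq> E``{v}" using assms sym_E trans_E unfolding sym_def trans_def by blast
    show "E``{v} \<subseteq> E``{u}" using assms sym_E trans_E unfolding sym_def trans_def by blast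
  qed
  thus ?thesis by (simp add: cls_def)
qed
lemma cls_eq_iff: "cls u = cls v \<longleftrightarrow> (u,v) \<in> E"
proof
  assume "cls u = cls v"
  thus "(u,v) \<in> E" using cls_in[of u] cls_in[of v] sym_E trans_E unfolding sym_def trans_def by metis
qed (rule E_cls)
lemma cls_cls[simp]: "cls (cls u) = cls u" using E_cls[OF cls_in[of u]] by simp
lemma V_U: "V \<subseteq> U" using f_props g_props by (auto simp: V_def U_def)
lemma cls_U: "u \<in> U \<Longrightarrow> cls u \<in> U" using E_V[OF cls_in[of u]] V_U by auto
lemma R_cls: "i\<in>I \<Longrightarrow> cls (2*\<psi> i+1) = cls (2*\<phi> i)"
proof -
  assume "i \<in> I"
  hence "(2*\<phi> i, 2*\<psi> i+1) \<in> E" unfolding E_def R0_def by blast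
  thus ?thesis using E_cls by simp
qed
lemma P_U: "P \<subseteq> U" using cls_U by (auto simp: P_def)
lemma cls_P: "p \<in> P \<Longrightarrow> cls p = p" by (auto simp: P_def)
lemma clsP: "u \<in> U \<Longrightarrow> cls u \<in> P" by (auto simp: P_def)
lemma finP: "finite P" using finU by (simp add: P_def)
lemma phiU: "i \<in> I \<Longrightarrow> 2*\<phi> i \<in> U" using f_props by (auto simp: U_def)
lemma psiU: "i \<in> I \<Longrightarrow> 2*\<psi> i+1 \<in> U" using g_props by (auto simp: U_def)
lemma ob_simps[simp]: "ob (2*j) = b j" "ob (Suc (2*k)) = c k" by (simp_all add: ob_def)
lemma ob_obj: "u \<in> U \<Longrightarrow> ob u \<in> Obj D" using J1_props J2_props by (auto simp: U_def)

definition Ip where "Ip p = {i\<in>I. cls (2*\<phi> i) = p}"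
definition Jo where "Jo p = (\<lambda>u. 2*u) ` {u\<in>U. cls u = p} \<union> (\<lambda>i. 2*i+1) ` Ip p"
definition Ja where "Ja p = (\<lambda>x. 3*x) ` Jo p \<union> (\<lambda>i. 3*i+1) ` Ip p \<union> (\<lambda>i. 3*i+2) ` Ip p"
definition JDom :: "nat \<Rightarrow> nat" where "JDom n = (if n mod 3 = 0 then n div 3 else 2*(n div 3)+1)"
definition JCod where "JCod n = (if n mod 3 = 0 then n div 3 else if n mod 3 = 1 then 2*(2*\<phi>(n div 3)) else 2*(2*\<psi>(n div 3)+1))"
definition JComp :: "nat \<Rightarrow> nat \<Rightarrow> nat" where "JComp g f = (if g mod 3 = 0 then f else g)"
definition Jc :: "nat \<Rightarrow> (nat,nat) cat" where
  "Jc p = \<lparr>Obj = Jo p, Arr = Ja p, Dom = JDom, Cod = JCod, Id = (\<lambda>x. 3*x), Comp = JComp\<rparr>"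
definition Fo where "Fo x = (if even x then ob (x div 2) else a (x div 2))"
definition Fa where "Fa n = (if n mod 3 = 0 then Id D (Fo (n div 3)) else if n mod 3 = 1 then F (n div 3) else G (n div 3))"

lemma J_simps[simp]: "JDom (3*x) = x" "JDom (Suc (3*x)) = Suc (2*x)" "JDom (Suc (Suc (3*x))) = Suc (2*x)"
  "JCod (3*x) = x" "JCod (Suc (3*x)) = 2*(2*\<phi> x)" "JCod (Suc (Suc (3*x))) = 2*(Suc (2*\<psi> x))"
  "JComp (3*x) f = f" "JComp (Suc (3*x)) f = Suc (3*x)" "JComp (Suc (Suc (3*x))) f = Suc (Suc (3*x))"
  "Fo (2*u) = ob u" "Fo (Suc (2*u)) = a u"
  "Fa (3*x) = Id D (Fo x)" "Fa (Suc (3*x)) = F x" "Fa (Suc (Suc (3*x))) = G x"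
  by (simp_all add: JDom_def JCod_def JComp_def Fo_def Fa_def)

lemma Jc_simps[simp]: "Obj (Jc p) = Jo p" "Arr (Jc p) = Ja p" "Dom (Jc p) = JDom" "Cod (Jc p) = JCod"
  "Id (Jc p) = (\<lambda>x. 3*x)" "Comp (Jc p) = JComp" by (simp_all add: Jc_def)

lemma Ja_E: assumes "n \<in> Ja p"
  obtains x where "x \<in> Jo p" "n = 3*x" | i where "i \<in> Ip p" "n = 3*i+1" | i where "i \<in> Ip p" "n = 3*i+2"
  using assms unfolding Ja_def by blast
lemma Jo_E: assumes "x \<in> Jo p"
  obtains u where "u \<in> U" "cls u = p" "x = 2*u" | i where "i \<in> Ip p" "x = 2*i+1"
  using assms unfolding Jo_def by blast
lemma Ip_facts: assumes "i \<in> Ip p" shows "i \<in> I" "4*\<phi> i \<in> Jo p" "Suc (Suc (4*\<psi> i)) \<in> Jo p" "Suc (2*i) \<in> Jo p"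
  "Suc (3*i) \<in> Ja p" "Suc (Suc (3*i)) \<in> Ja p"
proof -
  show i: "i \<in> I" using assms by (simp add: Ip_def)
  have p: "cls (2*\<phi> i) = p" using assms by (simp add: Ip_def)
  have "2*(2*\<phi> i) \<in> Jo p" unfolding Jo_def using phiU[OF i] p by blast
  thus "4*\<phi> i \<in> Jo p" by simp
  have "2*(2*\<psi> i+1) \<in> Jo p" unfolding Jo_def using psiU[OF i] p R_cls[OF i] by blast
  thus "Suc (Suc (4*\<psi> i)) \<in> Jo p" by simp
  show "Suc (2*i) \<in> Jo p" unfolding Jo_def using assms by force
  have "3*i+1 \<in> Ja p" unfolding Ja_def using assms by blast
  thus "Suc (3*i) \<in> Ja p" by simp
  have "3*i+2 \<in> Ja p" unfolding Ja_def using assms by blast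
  thus "Suc (Suc (3*i)) \<in> Ja p" by simp
qed
lemma Jo_Ja: "x \<in> Jo p \<Longrightarrow> 3*x \<in> Ja p" unfolding Ja_def by blast

lemma Jc_cat: "category (Jc p)"
proof -
  have 1: "\<forall>f\<in>Ja p. JDom f \<in> Jo p \<and> JCod f \<in> Jo p"
  proof
    fix f assume "f \<in> Ja p"
    thus "JDom f \<in> Jo p \<and> JCod f \<in> Jo p" by (cases rule: Ja_E) (auto simp: Ip_facts)
  qed
  have 2: "\<forall>x\<in>Jo p. 3*x \<in> Ja p \<and> JDom (3*x) = x \<and> JCod (3*x) = x" by (simp add: Jo_Ja)
  have 3: "\<forall>f\<in>Ja p. \<forall>g\<in>Ja p. JCod f = JDom g \<longrightarrow> JComp g f \<in> Ja p \<and> JDom (JComp g f) = JDom f \<and> JCod (JComp g f) = JCod g"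
  proof (intro ballI impI)
    fix f g assume f: "f \<in> Ja p" and g: "g \<in> Ja p" and fg: "JCod f = JDom g"
    from g f fg show "JComp g f \<in> Ja p \<and> JDom (JComp g f) = JDom f \<and> JCod (JComp g f) = JCod g"
      apply (cases rule: Ja_E; cases rule: Ja_E[OF f])
      apply (auto simp: Ip_facts)
      apply (simp_all add: JDom_def)
      apply presburger+
      done
  qed
  have 4: "\<forall>f\<in>Ja p. JComp f (3 * JDom f) = f \<and> JComp (3 * JCod f) f = f"
  proof
    fix f assume f: "f \<in> Ja p"
    show "JComp f (3 * JDom f) = f \<and> JComp (3 * JCod f) f = f" using f
      by (cases rule: Ja_E) (auto simp: JComp_def)
  qed
  have 5: "\<forall>f\<in>Ja p. \<forall>g\<in>Ja p. \<forall>h\<in>Ja p. JComp h (JComp g f) = JComp (JComp h g) f"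
  proof (intro ballI)
    fix f g h assume f: "f \<in> Ja p" and g: "g \<in> Ja p" and h: "h \<in> Ja p"
    show "JComp h (JComp g f) = JComp (JComp h g) f" using h g
      by (cases rule: Ja_E; cases rule: Ja_E[OF g]) auto
  qed
  show ?thesis unfolding category_def Jc_simps using 1 2 3 4 5 by blast
qed


lemma Fo_more[simp]: "Fo (4*x) = b x" "Fo (Suc (Suc (4*x))) = c x"
proof -
  have "Fo (2*(2*x)) = b x" by (simp only: J_simps ob_simps)
  thus "Fo (4*x) = b x" by simp
  have "Fo (2*(Suc (2*x))) = c x" by (simp only: J_simps ob_simps)
  thus "Fo (Suc (Suc (4*x))) = c x" by simp
qed

lemma Fo_obj: "x \<in> Jo p \<Longrightarrow> Fo x \<in> Obj D"
  by (cases rule: Jo_E) (auto simp: ob_obj Ip_facts I_props)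

lemma Fa_arr: assumes "n \<in> Ja p" shows "Fa n \<in> Arr D \<and> Dom D (Fa n) = Fo (JDom n) \<and> Cod D (Fa n) = Fo (JCod n)"
  using assms
proof (cases rule: Ja_E)
  case (1 x) thus ?thesis using Fo_obj[of x p] id_arr by simp
next
  case (2 i) thus ?thesis using f_props[of i] Ip_facts[of i p] by simp
next
  case (3 i) thus ?thesis using g_props[of i] Ip_facts[of i p] by simp
qed

lemma Jc_functor: "is_functor (Jc p) D Fo Fa"
proof -
  have 4: "\<forall>u\<in>Ja p. \<forall>v\<in>Ja p. JCod u = JDom v \<longrightarrow> Fa (JComp v u) = Comp D (Fa v) (Fa u)"
  proof (intro ballI impI)
    fix u v assume u: "u \<in> Ja p" and v: "v \<in> Ja p" and uv: "JCod u = JDom v"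
    from v show "Fa (JComp v u) = Comp D (Fa v) (Fa u)"
    proof (cases rule: Ja_E)
      case (1 x)
      then have "Fa (JComp v u) = Fa u" by simp
      also have "\<dots> = Comp D (Id D (Cod D (Fa u))) (Fa u)" by (rule id_l[symmetric]) (use Fa_arr[OF u] in blast)
      also have "Cod D (Fa u) = Fo x" using Fa_arr[OF u] uv 1 by simp
      finally show ?thesis using 1 by simp
    next
      case (2 i)
      from u obtain x where ux: "u = 3*x" "x = Suc (2*i)"
        by (cases rule: Ja_E) (use uv 2 in \<open>auto; presburger\<close>)+
      have "Fa u = Id D (Fo x)" using ux(1) by simp
      also have "Fo x = a i" using ux(2) by simp
      finally have "Fa u = Id D (a i)" .
      moreover have "Fa (JComp v u) = F i" using 2 by simp
      moreover have "Fa v = F i" using 2 by simp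
      ultimately show ?thesis using id_r[of "F i"] f_props[of i] Ip_facts[of i p] 2 by simp
    next
      case (3 i)
      from u obtain x where ux: "u = 3*x" "x = Suc (2*i)"
        by (cases rule: Ja_E) (use uv 3 in \<open>auto; presburger\<close>)+
      have "Fa u = Id D (Fo x)" using ux(1) by simp
      also have "Fo x = a i" using ux(2) by simp
      finally have "Fa u = Id D (a i)" .
      moreover have "Fa (JComp v u) = G i" using 3 by simp
      moreover have "Fa v = G i" using 3 by simp
      ultimately show ?thesis using id_r[of "G i"] g_props[of i] Ip_facts[of i p] 3 by simp
    qed
  qed
  show ?thesis unfolding is_functor_def Jc_simps using 4 Fo_obj Fa_arr by simp
qed

lemma Jc_finite: "finite_cat (Jc p)"
proof -
  have "finite (Ip p)" unfolding Ip_def using I_props by simp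
  moreover have "finite (Jo p)" unfolding Jo_def using finU \<open>finite (Ip p)\<close> by simp
  ultimately show ?thesis unfolding finite_cat_def Jc_simps Ja_def by simp
qed

definition Zr where "Zr p = ({(JDom u, JCod u) | u. u \<in> Ja p} \<union> {(JCod u, JDom u) | u. u \<in> Ja p})"

lemma Zr_arrs: assumes ip: "i \<in> Ip p"
  shows "(4*\<phi> i, Suc (2*i)) \<in> Zr p" "(Suc (2*i), 4*\<phi> i) \<in> Zr p"
    "(Suc (Suc (4*\<psi> i)), Suc (2*i)) \<in> Zr p" "(Suc (2*i), Suc (Suc (4*\<psi> i))) \<in> Zr p"
proof -
  have "(JCod (Suc (3*i)), JDom (Suc (3*i))) \<in> Zr p" "(JDom (Suc (3*i)), JCod (Suc (3*i))) \<in> Zr p"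
    unfolding Zr_def using Ip_facts(5)[OF ip] by blast+
  thus "(4*\<phi> i, Suc (2*i)) \<in> Zr p" "(Suc (2*i), 4*\<phi> i) \<in> Zr p" by simp_all
  have "(JCod (Suc (Suc (3*i))), JDom (Suc (Suc (3*i)))) \<in> Zr p" "(JDom (Suc (Suc (3*i))), JCod (Suc (Suc (3*i)))) \<in> Zr p"
    unfolding Zr_def using Ip_facts(6)[OF ip] by blast+
  thus "(Suc (Suc (4*\<psi> i)), Suc (2*i)) \<in> Zr p" "(Suc (2*i), Suc (Suc (4*\<psi> i))) \<in> Zr p" by simp_all
qed

lemma conn_main: assumes pP: "p \<in> P" and pw: "(p, w) \<in> E" shows "(2*p, 2*w) \<in> (Zr p)\<^sup>*"
  using pw unfolding E_def
proof (induction rule: rtrancl_induct)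
  case base thus ?case by simp
next
  case (step w w')
  have cw: "cls w = p" using E_cls[of p w] step(1) cls_P[OF pP] unfolding E_def by simp
  from step(2) show ?case
  proof
    assume "(w, w') \<in> R0"
    then obtain i where i: "i \<in> I" "w = 2*\<phi> i" "w' = 2*\<psi> i+1" unfolding R0_def by blast
    have ip: "i \<in> Ip p" using i cw by (simp add: Ip_def)
    have "(2*w, Suc (2*i)) \<in> Zr p" using Zr_arrs(1)[OF ip] i by simp
    moreover have "(Suc (2*i), 2*w') \<in> Zr p" using Zr_arrs(4)[OF ip] i by simp
    ultimately show ?case using step(3) by (meson rtrancl_into_rtrancl)
  next
    assume "(w, w') \<in> R0\<inverse>"
    then obtain i where i: "i \<in> I" "w' = 2*\<phi> i" "w = 2*\<psi> i+1" unfolding R0_def by blast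
    have ip: "i \<in> Ip p" using i cw R_cls[of i] by (simp add: Ip_def)
    have "(2*w, Suc (2*i)) \<in> Zr p" using Zr_arrs(3)[OF ip] i by simp
    moreover have "(Suc (2*i), 2*w') \<in> Zr p" using Zr_arrs(2)[OF ip] i by simp
    ultimately show ?case using step(3) by (meson rtrancl_into_rtrancl)
  qed
qed

lemma Jc_connected: assumes pP: "p \<in> P" shows "connected_cat (Jc p)"
proof -
  have pU: "p \<in> U" using pP P_U by auto
  have cp: "cls p = p" using cls_P[OF pP] .
  have sym: "sym ((Zr p)\<^sup>*)" by (rule sym_rtrancl) (auto simp: sym_def Zr_def)
  have to: "(2*p, x) \<in> (Zr p)\<^sup>*" if x: "x \<in> Jo p" for x
    using x
  proof (cases rule: Jo_E)
    case (1 u)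
    hence "(p, u) \<in> E" using cls_eq_iff[of p u] cp by simp
    thus ?thesis using conn_main[OF pP] 1 by simp
  next
    case (2 i)
    hence "cls (2*\<phi> i) = p" by (simp add: Ip_def)
    hence "(p, 2*\<phi> i) \<in> E" using cls_eq_iff cp by metis
    hence "(2*p, 4*\<phi> i) \<in> (Zr p)\<^sup>*" using conn_main[OF pP] by (metis mult.assoc numeral_Bit0_eq_double mult_2 )
    thus ?thesis using Zr_arrs(1)[OF 2(1)] 2(2) by (simp add: rtrancl_into_rtrancl)
  qed
  have "2*p \<in> Jo p" unfolding Jo_def using pU cp by blast
  moreover have "\<forall>x\<in>Jo p. \<forall>y\<in>Jo p. (x, y) \<in> (Zr p)\<^sup>*"
  proof (intro ballI)
    fix x y assume "x \<in> Jo p" "y \<in> Jo p"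
    hence "(x, 2*p) \<in> (Zr p)\<^sup>*" "(2*p, y) \<in> (Zr p)\<^sup>*" using to sym unfolding sym_def by blast+
    thus "(x, y) \<in> (Zr p)\<^sup>*" by simp
  qed
  ultimately show ?thesis unfolding connected_cat_def Jc_simps Zr_def[symmetric] by blast
qed

definition cc where "cc p = (SOME cl. colimit (Jc p) D Fo Fa (fst cl) (snd cl))"
definition w where "w p = fst (cc p)"
definition L where "L p = snd (cc p)"

lemma colim: assumes "p \<in> P" shows "colimit (Jc p) D Fo Fa (w p) (L p)"
proof -
  have "\<exists>c l. colimit (Jc p) D Fo Fa c l"
    using fcc Jc_cat[of p] Jc_finite[of p] Jc_connected[OF assms] Jc_functor[of p]
    unfolding has_finite_connected_colimits_def by blast
  hence "\<exists>cl. colimit (Jc p) D Fo Fa (fst cl) (snd cl)" by auto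
  hence "colimit (Jc p) D Fo Fa (fst (cc p)) (snd (cc p))" unfolding cc_def by (rule someI_ex)
  thus ?thesis by (simp add: w_def L_def)
qed

lemma w_obj: "p \<in> P \<Longrightarrow> w p \<in> Obj D" using colim unfolding colimit_def cocone_def by blast
lemma L_arr: "p \<in> P \<Longrightarrow> x \<in> Jo p \<Longrightarrow> L p x \<in> Arr D \<and> Dom D (L p x) = Fo x \<and> Cod D (L p x) = w p"
  using colim unfolding colimit_def cocone_def Jc_simps by blast
lemma L_comm: "p \<in> P \<Longrightarrow> n \<in> Ja p \<Longrightarrow> Comp D (L p (JCod n)) (Fa n) = L p (JDom n)"
  using colim unfolding colimit_def cocone_def Jc_simps by blast
lemma L_univ: "p \<in> P \<Longrightarrow> cocone (Jc p) D Fo Fa c' l' \<Longrightarrow>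
   \<exists>!h. h \<in> Arr D \<and> Dom D h = w p \<and> Cod D h = c' \<and> (\<forall>x\<in>Jo p. Comp D h (L p x) = l' x)"
  using colim unfolding colimit_def Jc_simps by blast


definition W where "W = (P, restrict w P)"
definition pp where "pp = ((J1,b), W, \<lambda>j\<in>J1. cls (2*j), \<lambda>j\<in>J1. L (cls (2*j)) (4*j))"
definition qq where "qq = ((J2,c), W, \<lambda>k\<in>J2. cls (Suc (2*k)), \<lambda>k\<in>J2. L (cls (Suc (2*k))) (Suc (Suc (4*k))))"

lemma jU: "j \<in> J1 \<Longrightarrow> 2*j \<in> U" by (simp add: U_def)
lemma kU: "k \<in> J2 \<Longrightarrow> Suc (2*k) \<in> U" by (simp add: U_def)
lemma jJo: "j \<in> J1 \<Longrightarrow> 4*j \<in> Jo (cls (2*j))"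
proof -
  assume "j \<in> J1"
  hence "2*(2*j) \<in> Jo (cls (2*j))" unfolding Jo_def using jU by blast
  thus ?thesis by simp
qed
lemma kJo: "k \<in> J2 \<Longrightarrow> Suc (Suc (4*k)) \<in> Jo (cls (Suc (2*k)))"
proof -
  assume "k \<in> J2"
  hence "2*(Suc (2*k)) \<in> Jo (cls (Suc (2*k)))" unfolding Jo_def using kU by blast
  thus ?thesis by simp
qed

lemma W_obj: "W \<in> tw_objs D"
  unfolding W_def tw_objs_def using finP w_obj by auto

lemma pp_arr: "pp \<in> tw_arrs D"
proof -
  have "\<forall>j\<in>J1. cls (2*j) \<in> P \<and> L (cls (2*j)) (4*j) \<in> Arr D \<and> Dom D (L (cls (2*j)) (4*j)) = b j \<and>
      Cod D (L (cls (2*j)) (4*j)) = restrict w P (cls (2*j))"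
    using L_arr[OF clsP[OF jU] jJo] clsP[OF jU] by simp
  thus ?thesis unfolding pp_def tw_arrs_def using Yo W_obj by (simp add: W_def)
qed

lemma qq_arr: "qq \<in> tw_arrs D"
proof -
  have "\<forall>k\<in>J2. cls (Suc (2*k)) \<in> P \<and> L (cls (Suc (2*k))) (Suc (Suc (4*k))) \<in> Arr D \<and>
      Dom D (L (cls (Suc (2*k))) (Suc (Suc (4*k)))) = c k \<and>
      Cod D (L (cls (Suc (2*k))) (Suc (Suc (4*k)))) = restrict w P (cls (Suc (2*k)))"
    using L_arr[OF clsP[OF kU] kJo] clsP[OF kU] by simp
  thus ?thesis unfolding qq_def tw_arrs_def using Zo W_obj by (simp add: W_def)
qed

lemma pq_comm: "Comp (Tw D) pp ((I,a),(J1,b),\<phi>,F) = Comp (Tw D) qq ((I,a),(J2,c),\<psi>,G)"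
proof -
  have "\<forall>i\<in>I. cls (2*\<phi> i) = cls (Suc (2*\<psi> i)) \<and>
     Comp D (L (cls (2*\<phi> i)) (4*\<phi> i)) (F i) = Comp D (L (cls (Suc (2*\<psi> i))) (Suc (Suc (4*\<psi> i)))) (G i)"
  proof
    fix i assume i: "i \<in> I"
    define p where "p = cls (2*\<phi> i)"
    have pP: "p \<in> P" unfolding p_def using clsP phiU i by blast
    have ip: "i \<in> Ip p" using i by (simp add: Ip_def p_def)
    have e: "cls (Suc (2*\<psi> i)) = p" using R_cls[OF i] by (simp add: p_def)
    have "Comp D (L p (JCod (Suc (3*i)))) (Fa (Suc (3*i))) = L p (JDom (Suc (3*i)))"
      using L_comm[OF pP Ip_facts(5)[OF ip]] .
    moreover have "Comp D (L p (JCod (Suc (Suc (3*i))))) (Fa (Suc (Suc (3*i)))) = L p (JDom (Suc (Suc (3*i))))"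
      using L_comm[OF pP Ip_facts(6)[OF ip]] .
    ultimately show "cls (2*\<phi> i) = cls (Suc (2*\<psi> i)) \<and>
     Comp D (L (cls (2*\<phi> i)) (4*\<phi> i)) (F i) = Comp D (L (cls (Suc (2*\<psi> i))) (Suc (Suc (4*\<psi> i)))) (G i)"
      using e by (simp add: p_def)
  qed
  thus ?thesis unfolding pp_def qq_def using f_props g_props by (auto intro!: restrict_ext)
qed

end

locale puniv = pspan +
  fixes Q :: "nat set" and wq
    and \<phi>' :: "nat \<Rightarrow> nat" and F'
    and \<psi>' :: "nat \<Rightarrow> nat" and G'
  assumes pa: "((J1,b),(Q,wq),\<phi>',F') \<in> tw_arrs D"
    and qa: "((J2,c),(Q,wq),\<psi>',G') \<in> tw_arrs D"
    and eqs: "\<And>i. i \<in> I \<Longrightarrow> \<phi>' (\<phi> i) = \<psi>' (\<psi> i) \<and> Comp D (F' (\<phi> i)) (F i) = Comp D (G' (\<psi> i)) (G i)"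
begin

lemma Wq_obj: "(Q,wq) \<in> tw_objs D" using pa by (simp add: tw_arrs_def)
lemma wq_obj: "x \<in> Q \<Longrightarrow> wq x \<in> Obj D" using Wq_obj by (simp add: tw_objs_def)
lemma p'_props: assumes "j\<in>J1" shows "\<phi>' j \<in> Q" "F' j \<in> Arr D" "Dom D (F' j) = b j" "Cod D (F' j) = wq (\<phi>' j)"
  using pa assms by (auto simp: tw_arrs_def)
lemma q'_props: assumes "k\<in>J2" shows "\<psi>' k \<in> Q" "G' k \<in> Arr D" "Dom D (G' k) = c k" "Cod D (G' k) = wq (\<psi>' k)"
  using qa assms by (auto simp: tw_arrs_def)
lemma ext': "\<phi>' \<in> extensional J1" "F' \<in> extensional J1" "\<psi>' \<in> extensional J2" "G' \<in> extensional J2"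
  using pa qa by (auto simp: tw_arrs_def)

definition t where "t u = (if even u then \<phi>' (u div 2) else \<psi>' (u div 2))"
definition T where "T u = (if even u then F' (u div 2) else G' (u div 2))"
lemma tT_simps[simp]: "t (2*j) = \<phi>' j" "t (Suc (2*k)) = \<psi>' k" "T (2*j) = F' j" "T (Suc (2*k)) = G' k"
  by (simp_all add: t_def T_def)

lemma t_E: "(u,v) \<in> E \<Longrightarrow> t u = t v"
  unfolding E_def
proof (induction rule: rtrancl_induct)
  case (step y z)
  from step(2) have "t y = t z" using eqs unfolding R0_def by auto
  thus ?case using step(3) by simp
qed simp

lemma t_cls: "t (cls u) = t u" using t_E[OF cls_in[of u]] by simp

lemma T_props: assumes "u \<in> U"
  shows "T u \<in> Arr D" "Dom D (T u) = ob u" "Cod D (T u) = wq (t u)" "t u \<in> Q"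
  using assms p'_props q'_props by (auto simp: U_def)

definition lg where "lg x = (if even x then T (x div 2) else Comp D (T (2*\<phi>(x div 2))) (F (x div 2)))"
lemma lg_simps[simp]: "lg (2*u) = T u" "lg (Suc (2*i)) = Comp D (T (2*\<phi> i)) (F i)"
  by (simp_all add: lg_def)
lemma lg_more[simp]: "lg (4*x) = T (2*x)" "lg (Suc (Suc (4*x))) = T (Suc (2*x))"
proof -
  have "lg (2*(2*x)) = T (2*x)" by (simp only: lg_simps)
  thus "lg (4*x) = T (2*x)" by simp
  have "lg (2*(Suc (2*x))) = T (Suc (2*x))" by (simp only: lg_simps)
  thus "lg (Suc (Suc (4*x))) = T (Suc (2*x))" by simp
qed

lemma lg_arr: assumes pP: "p \<in> P" and x: "x \<in> Jo p"
  shows "lg x \<in> Arr D \<and> Dom D (lg x) = Fo x \<and> Cod D (lg x) = wq (t p)"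
  using x
proof (cases rule: Jo_E)
  case (1 u)
  have "t u = t p" using t_cls[of u] 1 by simp
  thus ?thesis using T_props[OF 1(1)] 1 by simp
next
  case (2 i)
  have i: "i \<in> I" and cp: "cls (2*\<phi> i) = p" using 2 by (auto simp: Ip_def)
  have tp: "t (2*\<phi> i) = t p" using t_cls[of "2*\<phi> i"] cp by simp
  have "Comp D (T (2*\<phi> i)) (F i) \<in> Arr D \<and> Dom D (Comp D (T (2*\<phi> i)) (F i)) = Dom D (F i) \<and>
      Cod D (Comp D (T (2*\<phi> i)) (F i)) = Cod D (T (2*\<phi> i))"
    using comp_arr T_props[OF phiU[OF i]] f_props[OF i] by simp
  thus ?thesis using 2 T_props[OF phiU[OF i]] f_props[OF i] tp by simp
qed

lemma lg_cocone: assumes pP: "p \<in> P" shows "cocone (Jc p) D Fo Fa (wq (t p)) lg"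
proof -
  have pU: "p \<in> U" using pP P_U by auto
  have 1: "wq (t p) \<in> Obj D" using wq_obj T_props(4)[OF pU] by simp
  have 2: "\<forall>n\<in>Ja p. Comp D (lg (JCod n)) (Fa n) = lg (JDom n)"
  proof
    fix n assume "n \<in> Ja p"
    thus "Comp D (lg (JCod n)) (Fa n) = lg (JDom n)"
    proof (cases rule: Ja_E)
      case (1 x)
      have "Comp D (lg x) (Id D (Dom D (lg x))) = lg x" using id_r lg_arr[OF pP 1(1)] by blast
      thus ?thesis using 1 lg_arr[OF pP 1(1)] by simp
    next
      case (2 i) thus ?thesis by simp
    next
      case (3 i)
      have i: "i \<in> I" using 3 by (simp add: Ip_def)
      thus ?thesis using 3 eqs[OF i] by simp
    qed
  qed
  show ?thesis unfolding cocone_def Jc_simps using 1 2 lg_arr[OF pP] by blast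
qed

definition H where "H p = (THE h. h \<in> Arr D \<and> Dom D h = w p \<and> Cod D h = wq (t p) \<and> (\<forall>x\<in>Jo p. Comp D h (L p x) = lg x))"

lemma H_props: assumes "p \<in> P"
  shows "H p \<in> Arr D \<and> Dom D (H p) = w p \<and> Cod D (H p) = wq (t p) \<and> (\<forall>x\<in>Jo p. Comp D (H p) (L p x) = lg x)"
  unfolding H_def by (rule theI'[OF L_univ[OF assms lg_cocone[OF assms]]])

lemma H_unique: assumes "p \<in> P" "h \<in> Arr D" "Dom D h = w p" "Cod D h = wq (t p)" "\<forall>x\<in>Jo p. Comp D h (L p x) = lg x"
  shows "h = H p"
  unfolding H_def by (rule the1_equality[OF L_univ[OF assms(1) lg_cocone[OF assms(1)]], symmetric]) (use assms in blast)

definition hh where "hh = (W, (Q,wq), \<lambda>p\<in>P. t p, \<lambda>p\<in>P. H p)"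

lemma ext_eq: "f \<in> extensional A \<Longrightarrow> (\<And>x. x \<in> A \<Longrightarrow> g x = f x) \<Longrightarrow> restrict g A = f"
  by (metis extensional_restrict restrict_ext)

lemma hh_arr: "hh \<in> tw_arrs D"
proof -
  have "\<forall>p\<in>P. t p \<in> Q \<and> H p \<in> Arr D \<and> Dom D (H p) = restrict w P p \<and> Cod D (H p) = wq (t p)"
    using H_props T_props(4) P_U by auto
  thus ?thesis unfolding hh_def tw_arrs_def using W_obj Wq_obj by (simp add: W_def)
qed

lemma hh_pp: "Comp (Tw D) hh pp = ((J1,b),(Q,wq),\<phi>',F')"
proof -
  have "(\<lambda>i\<in>J1. (\<lambda>p\<in>P. t p) ((\<lambda>j\<in>J1. cls (2*j)) i)) = \<phi>'"
    by (rule ext_eq[OF ext'(1)]) (simp add: clsP jU t_cls)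
  moreover have "(\<lambda>i\<in>J1. Comp D ((\<lambda>p\<in>P. H p) ((\<lambda>j\<in>J1. cls (2*j)) i)) ((\<lambda>j\<in>J1. L (cls (2*j)) (4*j)) i)) = F'"
    by (rule ext_eq[OF ext'(2)]) (use H_props[OF clsP[OF jU]] jJo in \<open>simp add: clsP jU\<close>)
  ultimately show ?thesis unfolding hh_def pp_def W_def Tw_simps by (simp only: fst_conv)
qed

lemma hh_qq: "Comp (Tw D) hh qq = ((J2,c),(Q,wq),\<psi>',G')"
proof -
  have "(\<lambda>i\<in>J2. (\<lambda>p\<in>P. t p) ((\<lambda>k\<in>J2. cls (Suc (2*k))) i)) = \<psi>'"
    by (rule ext_eq[OF ext'(3)]) (simp add: clsP kU t_cls)
  moreover have "(\<lambda>i\<in>J2. Comp D ((\<lambda>p\<in>P. H p) ((\<lambda>k\<in>J2. cls (Suc (2*k))) i)) ((\<lambda>k\<in>J2. L (cls (Suc (2*k))) (Suc (Suc (4*k)))) i)) = G'"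
    by (rule ext_eq[OF ext'(4)]) (use H_props[OF clsP[OF kU]] kJo in \<open>simp add: clsP kU\<close>)
  ultimately show ?thesis unfolding hh_def qq_def W_def Tw_simps by (simp only: fst_conv)
qed


lemma hh_unique:
  assumes ha: "(A, B, \<theta>, \<Theta>) \<in> tw_arrs D" and AW: "A = W" and B: "B = (Q,wq)"
    and hp: "Comp (Tw D) (A,B,\<theta>,\<Theta>) pp = ((J1,b),(Q,wq),\<phi>',F')"
    and hq: "Comp (Tw D) (A,B,\<theta>,\<Theta>) qq = ((J2,c),(Q,wq),\<psi>',G')"
  shows "(A,B,\<theta>,\<Theta>) = hh"
proof -
  from hp have e1: "(\<lambda>i\<in>J1. \<theta> ((\<lambda>j\<in>J1. cls (2*j)) i)) = \<phi>'"
    and e2: "(\<lambda>i\<in>J1. Comp D (\<Theta> ((\<lambda>j\<in>J1. cls (2*j)) i)) ((\<lambda>j\<in>J1. L (cls (2*j)) (4*j)) i)) = F'"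
    unfolding pp_def by (simp_all only: Tw_simps prod.inject fst_conv)
  from hq have e3: "(\<lambda>i\<in>J2. \<theta> ((\<lambda>k\<in>J2. cls (Suc (2*k))) i)) = \<psi>'"
    and e4: "(\<lambda>i\<in>J2. Comp D (\<Theta> ((\<lambda>k\<in>J2. cls (Suc (2*k))) i)) ((\<lambda>k\<in>J2. L (cls (Suc (2*k))) (Suc (Suc (4*k)))) i)) = G'"
    unfolding qq_def by (simp_all only: Tw_simps prod.inject fst_conv)
  have j1: "\<theta> (cls (2*j)) = \<phi>' j" "Comp D (\<Theta> (cls (2*j))) (L (cls (2*j)) (4*j)) = F' j" if "j \<in> J1" for j
    using fun_cong[OF e1, of j] fun_cong[OF e2, of j] that by simp_all
  have k1: "\<theta> (cls (Suc (2*k))) = \<psi>' k" "Comp D (\<Theta> (cls (Suc (2*k)))) (L (cls (Suc (2*k))) (Suc (Suc (4*k)))) = G' k" if "k \<in> J2" for k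
    using fun_cong[OF e3, of k] fun_cong[OF e4, of k] that by simp_all
  have hprops: "\<theta> p \<in> Q \<and> \<Theta> p \<in> Arr D \<and> Dom D (\<Theta> p) = w p \<and> Cod D (\<Theta> p) = wq (\<theta> p)" if "p \<in> P" for p
    using ha that unfolding AW B W_def tw_arrs_def by auto
  have hext: "\<theta> \<in> extensional P" "\<Theta> \<in> extensional P" using ha unfolding AW W_def tw_arrs_def by auto
  have th: "\<theta> p = t p" if pP: "p \<in> P" for p
  proof -
    have cp: "cls p = p" using cls_P[OF pP] .
    have "p \<in> U" using pP P_U by auto
    then consider j where "j \<in> J1" "p = 2*j" | k where "k \<in> J2" "p = Suc (2*k)" unfolding U_def by auto
    thus ?thesis
    proof cases
      case 1 thus ?thesis using j1(1)[OF 1(1)] cp by simp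
    next
      case 2 thus ?thesis using k1(1)[OF 2(1)] cp by simp
    qed
  qed
  have Th: "\<Theta> p = H p" if pP: "p \<in> P" for p
  proof -
    have cp: "cls p = p" using cls_P[OF pP] .
    have ev: "Comp D (\<Theta> p) (L p (2*u)) = T u" if u: "u \<in> U" "cls u = p" for u
    proof -
      from u(1) consider j where "j \<in> J1" "u = 2*j" | k where "k \<in> J2" "u = Suc (2*k)" unfolding U_def by auto
      thus ?thesis
      proof cases
        case 1 thus ?thesis using j1(2)[OF 1(1)] u(2) by simp
      next
        case 2 thus ?thesis using k1(2)[OF 2(1)] u(2) by simp
      qed
    qed
    have "\<forall>x\<in>Jo p. Comp D (\<Theta> p) (L p x) = lg x"
    proof
      fix x assume "x \<in> Jo p"
      thus "Comp D (\<Theta> p) (L p x) = lg x"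
      proof (cases rule: Jo_E)
        case (1 u) thus ?thesis using ev by simp
      next
        case (2 i)
        have i: "i \<in> I" and ci: "cls (2*\<phi> i) = p" using 2 by (auto simp: Ip_def)
        have Lc: "Comp D (L p (4*\<phi> i)) (F i) = L p (Suc (2*i))"
          using L_comm[OF pP Ip_facts(5)[OF 2(1)]] by simp
        have L4: "L p (4*\<phi> i) \<in> Arr D \<and> Dom D (L p (4*\<phi> i)) = b (\<phi> i) \<and> Cod D (L p (4*\<phi> i)) = w p"
          using L_arr[OF pP Ip_facts(2)[OF 2(1)]] by simp
        have ev4: "Comp D (\<Theta> p) (L p (4*\<phi> i)) = T (2*\<phi> i)"
          using ev[OF phiU[OF i] ci] by simp
        have "Comp D (\<Theta> p) (L p x) = Comp D (\<Theta> p) (Comp D (L p (4*\<phi> i)) (F i))" using Lc 2 by simp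
        also have "\<dots> = Comp D (Comp D (\<Theta> p) (L p (4*\<phi> i))) (F i)"
          using assoc[of "F i" "L p (4*\<phi> i)" "\<Theta> p"] f_props[OF i] L4 hprops[OF pP] by simp
        also have "\<dots> = lg x" using ev4 2 by simp
        finally show ?thesis .
      qed
    qed
    thus ?thesis using H_unique[OF pP] hprops[OF pP] th[OF pP] by simp
  qed
  have "restrict t P = \<theta>" by (rule ext_eq[OF hext(1)]) (simp add: th)
  moreover have "restrict H P = \<Theta>" by (rule ext_eq[OF hext(2)]) (simp add: Th)
  ultimately show ?thesis unfolding hh_def AW B by simp
qed

end

lemma (in pspan) pushout_here:
  "\<exists>p q. p \<in> Arr (Tw D) \<and> q \<in> Arr (Tw D) \<and> Dom (Tw D) p = (J1,b) \<and> Dom (Tw D) q = (J2,c) \<and>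
          Cod (Tw D) p = Cod (Tw D) q \<and> Comp (Tw D) p ((I,a),(J1,b),\<phi>,F) = Comp (Tw D) q ((I,a),(J2,c),\<psi>,G) \<and>
          (\<forall>p' q'. p' \<in> Arr (Tw D) \<and> q' \<in> Arr (Tw D) \<and> Dom (Tw D) p' = (J1,b) \<and> Dom (Tw D) q' = (J2,c) \<and>
              Cod (Tw D) p' = Cod (Tw D) q' \<and> Comp (Tw D) p' ((I,a),(J1,b),\<phi>,F) = Comp (Tw D) q' ((I,a),(J2,c),\<psi>,G) \<longrightarrow>
             (\<exists>!h. h \<in> Arr (Tw D) \<and> Dom (Tw D) h = Cod (Tw D) p \<and> Cod (Tw D) h = Cod (Tw D) p' \<and>
                    Comp (Tw D) h p = p' \<and> Comp (Tw D) h q = q'))"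
proof (intro exI conjI allI impI)
  show "pp \<in> Arr (Tw D)" "qq \<in> Arr (Tw D)" using pp_arr qq_arr by simp_all
  show "Dom (Tw D) pp = (J1,b)" "Dom (Tw D) qq = (J2,c)" "Cod (Tw D) pp = Cod (Tw D) qq"
    by (simp_all add: pp_def qq_def)
  show "Comp (Tw D) pp ((I,a),(J1,b),\<phi>,F) = Comp (Tw D) qq ((I,a),(J2,c),\<psi>,G)" by (rule pq_comm)
  fix p' q'
  assume H: "p' \<in> Arr (Tw D) \<and> q' \<in> Arr (Tw D) \<and> Dom (Tw D) p' = (J1,b) \<and> Dom (Tw D) q' = (J2,c) \<and>
              Cod (Tw D) p' = Cod (Tw D) q' \<and> Comp (Tw D) p' ((I,a),(J1,b),\<phi>,F) = Comp (Tw D) q' ((I,a),(J2,c),\<psi>,G)"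
  obtain Y1 W1 \<phi>' F' where p': "p' = (Y1, W1, \<phi>', F')" by (cases p') auto
  obtain Z1 W2 \<psi>' G' where q': "q' = (Z1, W2, \<psi>', G')" by (cases q') auto
  obtain Q wq where W1: "W1 = (Q, wq)" by (cases W1) auto
  have Y1: "Y1 = (J1,b)" and Z1: "Z1 = (J2,c)" and W2: "W2 = W1" using H p' q' by simp_all
  have "p' \<in> tw_arrs D" "q' \<in> tw_arrs D" using H by simp_all
  hence pa: "((J1,b),(Q,wq),\<phi>',F') \<in> tw_arrs D" and qa: "((J2,c),(Q,wq),\<psi>',G') \<in> tw_arrs D"
    unfolding p' q' Y1 Z1 W2 W1 by simp_all
  have ceq: "(\<lambda>i\<in>I. \<phi>' (\<phi> i)) = (\<lambda>i\<in>I. \<psi>' (\<psi> i)) \<and>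
     (\<lambda>i\<in>I. Comp D (F' (\<phi> i)) (F i)) = (\<lambda>i\<in>I. Comp D (G' (\<psi> i)) (G i))"
    using H p' q' W2 by simp
  have eqs: "\<phi>' (\<phi> i) = \<psi>' (\<psi> i) \<and> Comp D (F' (\<phi> i)) (F i) = Comp D (G' (\<psi> i)) (G i)" if "i \<in> I" for i
    using fun_cong[OF conjunct1[OF ceq], of i] fun_cong[OF conjunct2[OF ceq], of i] that by simp
  interpret U: puniv D I a J1 b J2 c \<phi> F \<psi> G Q wq \<phi>' F' \<psi>' G'
    by unfold_locales (use pa qa eqs in auto)
  show "\<exists>!h. h \<in> Arr (Tw D) \<and> Dom (Tw D) h = Cod (Tw D) pp \<and> Cod (Tw D) h = Cod (Tw D) p' \<and>
                    Comp (Tw D) h pp = p' \<and> Comp (Tw D) h qq = q'"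
  proof (rule ex1I[of _ U.hh])
    show "U.hh \<in> Arr (Tw D) \<and> Dom (Tw D) U.hh = Cod (Tw D) pp \<and> Cod (Tw D) U.hh = Cod (Tw D) p' \<and>
                    Comp (Tw D) U.hh pp = p' \<and> Comp (Tw D) U.hh qq = q'"
      using U.hh_arr U.hh_pp U.hh_qq p' q' Y1 Z1 W1 W2 by (simp add: U.hh_def pp_def)
  next
    fix h assume h: "h \<in> Arr (Tw D) \<and> Dom (Tw D) h = Cod (Tw D) pp \<and> Cod (Tw D) h = Cod (Tw D) p' \<and>
                    Comp (Tw D) h pp = p' \<and> Comp (Tw D) h qq = q'"
    obtain A B \<theta> \<Theta> where hd: "h = (A,B,\<theta>,\<Theta>)" by (cases h) auto
    have "h \<in> tw_arrs D" using h by simp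
    hence h1: "(A,B,\<theta>,\<Theta>) \<in> tw_arrs D" unfolding hd .
    have h2: "A = W" using h hd by (simp add: pp_def)
    have h3: "B = (Q,wq)" using h hd p' W1 by simp
    have h4: "Comp (Tw D) (A,B,\<theta>,\<Theta>) pp = ((J1,b),(Q,wq),\<phi>',F')" using h hd p' Y1 W1 by metis
    have h5: "Comp (Tw D) (A,B,\<theta>,\<Theta>) qq = ((J2,c),(Q,wq),\<psi>',G')" using h hd q' Z1 W1 W2 by metis
    show "h = U.hh" unfolding hd by (rule U.hh_unique[OF h1 h2 h3 h4 h5])
  qed
qed

theorem mainTheorem5:
  fixes D :: "('o, 'a) cat"
  assumes "category D"
    and "has_finite_connected_colimits D"
  shows "has_pushouts (Tw D)"
  unfolding has_pushouts_def
proof (intro ballI impI)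
  fix f g assume f: "f \<in> Arr (Tw D)" and g: "g \<in> Arr (Tw D)" and fg: "Dom (Tw D) f = Dom (Tw D) g"
  obtain X Y \<phi> F where fd: "f = (X,Y,\<phi>,F)" by (cases f) auto
  obtain X' Z \<psi> G where gd: "g = (X',Z,\<psi>,G)" by (cases g) auto
  obtain I a where X: "X = (I,a)" by (cases X) auto
  obtain J1 b where Y: "Y = (J1,b)" by (cases Y) auto
  obtain J2 c where Z: "Z = (J2,c)" by (cases Z) auto
  have X': "X' = X" using fg fd gd by simp
  have fa: "((I,a),(J1,b),\<phi>,F) \<in> tw_arrs D" using f fd X Y by simp
  have ga: "((I,a),(J2,c),\<psi>,G) \<in> tw_arrs D" using g gd X' X Z by simp
  interpret S: pspan D I a J1 b J2 c \<phi> F \<psi> G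
    by unfold_locales (use assms fa ga in \<open>auto simp: tw_arrs_def\<close>)
  show "\<exists>p q. p \<in> Arr (Tw D) \<and> q \<in> Arr (Tw D) \<and> Dom (Tw D) p = Cod (Tw D) f \<and> Dom (Tw D) q = Cod (Tw D) g \<and>
          Cod (Tw D) p = Cod (Tw D) q \<and> Comp (Tw D) p f = Comp (Tw D) q g \<and>
          (\<forall>p' q'. p' \<in> Arr (Tw D) \<and> q' \<in> Arr (Tw D) \<and> Dom (Tw D) p' = Cod (Tw D) f \<and> Dom (Tw D) q' = Cod (Tw D) g \<and>
              Cod (Tw D) p' = Cod (Tw D) q' \<and> Comp (Tw D) p' f = Comp (Tw D) q' g \<longrightarrow>
             (\<exists>!h. h \<in> Arr (Tw D) \<and> Dom (Tw D) h = Cod (Tw D) p \<and> Cod (Tw D) h = Cod (Tw D) p' \<and>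
                    Comp (Tw D) h p = p' \<and> Comp (Tw D) h q = q'))"
    using S.pushout_here unfolding fd gd X' X Y Z by simp
qed

end
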